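(* Let $U_3=(|0\rangle\langle0|\otimes I_2+|1\rangle\langle1|\otimes\sigma_1)\otimes I_2-2\,|1\rangle\langle1|\otimes|0\rangle\langle1|\otimes|1\rangle\langle1|$ and $U_6=(T_{AC}\otimes (I_2)_B)(H\otimes I_2\otimes I_2)U_3$, which equals $$\tfrac{1}{\sqrt2}\Big[|0\rangle\langle0|\otimes I_2\otimes I_2+|0\rangle\langle1|\otimes(\sigma_1\otimes I_2-2|0\rangle\langle1|\otimes|1\rangle\langle1|)+|1\rangle\langle0|\otimes I_2\otimes\sigma_1+|1\rangle\langle1|\otimes(2|0\rangle\langle1|\otimes|0\rangle\langle1|-\sigma_1\otimes\sigma_1)\Big].$$ Then $\mathrm{sr}(U_6)=6$.
   Context: $I_2$ is the $2\times 2$ identity, $\sigma_1=\begin{bmatrix}0&1\\1&0\end{bmatrix}$, $H=\frac{1}{\sqrt2}\begin{bmatrix}1&1\\1&-1\end{bmatrix}$, $\{|0\rangle,|1\rangle\}$ the standard basis of $\mathbb{C}^2$. $T=|0\rangle\langle0|\otimes I_2+|1\rangle\langle1|\otimes\sigma_1$ is the CNOT gate; $T_{AC}\otimes(I_2)_B$ denotes $T$ with control qubit $A$ and target qubit $C$, acting as identity on $B$. Tensor factors are ordered $A\otimes B\otimes C$. For a matrix $U$ on $\mathbb{C}^2\otimes\mathbb{C}^2\otimes\mathbb{C}^2$ (systems $A,B,C$), its Schmidt rank $\mathrm{sr}(U)$ is the least integer $r$ such that $U=\sum_{j=1}^r A_j\otimes B_j\otimes C_j$ with $A_j,B_j,C_j$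 complex $2\times 2$ matrices (i.e. the tensor rank of $U$). *)

theory Defs
  imports Complex_Main
begin

text \<open>Qubit basis states are indexed by bool: False = |0>, True = |1>.
  A 2x2 complex matrix is a function bool => bool => complex (row, column).
  An operator on C^2 (x) C^2 (x) C^2 (systems A,B,C in this order) is a
  function on triples of basis indices (a,b,c).\<close>

type_synonym mat2 = "bool \<Rightarrow> bool \<Rightarrow> complex"
type_synonym op3 = "bool \<times> bool \<times> bool \<Rightarrow> bool \<times> bool \<times> bool \<Rightarrow> complex"

definition ketbra :: "bool \<Rightarrow> bool \<Rightarrow> mat2" where
  "ketbra i j = (\<lambda>a b. if a = i \<and> b = j then 1 else 0)"

definition I2 :: mat2 where
  "I2 = (\<lambda>a b. if a = b then 1 else 0)"

definition sigma1 :: mat2 where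
  "sigma1 = (\<lambda>a b. if a \<noteq> b then 1 else 0)"

definition hadamard :: mat2 where
  "hadamard = (\<lambda>a b. (if a \<and> b then -1 else 1) / complex_of_real (sqrt 2))"

definition kron3 :: "mat2 \<Rightarrow> mat2 \<Rightarrow> mat2 \<Rightarrow> op3" where
  "kron3 A B C = (\<lambda>(a,b,c) (a',b',c'). A a a' * B b b' * C c c')"

definition op3_add :: "op3 \<Rightarrow> op3 \<Rightarrow> op3" where
  "op3_add M N = (\<lambda>i j. M i j + N i j)"

definition op3_scale :: "complex \<Rightarrow> op3 \<Rightarrow> op3" where
  "op3_scale s M = (\<lambda>i j. s * M i j)"

definition op3_mult :: "op3 \<Rightarrow> op3 \<Rightarrow> op3" where
  "op3_mult M N = (\<lambda>i j. \<Sum>k\<in>UNIV. M i k * N k j)"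

definition schmidt_rank :: "op3 \<Rightarrow> nat" where
  "schmidt_rank U = (LEAST r. \<exists>As Bs Cs :: nat \<Rightarrow> mat2.
      U = (\<lambda>i j. \<Sum>k<r. kron3 (As k) (Bs k) (Cs k) i j))"

definition T_AB_I :: op3 where
  "T_AB_I = op3_add (kron3 (ketbra False False) I2 I2) (kron3 (ketbra True True) sigma1 I2)"

definition T_AC_IB :: op3 where
  "T_AC_IB = op3_add (kron3 (ketbra False False) I2 I2) (kron3 (ketbra True True) I2 sigma1)"

definition U3 :: op3 where
  "U3 = op3_add T_AB_I
          (op3_scale (-2) (kron3 (ketbra True True) (ketbra False True) (ketbra True True)))"

definition U6 :: op3 where
  "U6 = op3_mult T_AC_IB (op3_mult (kron3 hadamard I2 I2) U3)"

end

theory Submission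
  imports Defs "HOL-Analysis.Cartesian_Space"
begin

lemma sumUNIV3: "(\<Sum>k\<in>(UNIV::(bool\<times>bool\<times>bool) set). f k) = f (False,False,False) + f (False,False,True) + f (False,True,False) + f (False,True,True) + f (True,False,False) + f (True,False,True) + f (True,True,False) + f (True,True,True)"
proof -
  have U: "(UNIV::(bool\<times>bool\<times>bool) set) = {(False,False,False), (False,False,True), (False,True,False), (False,True,True), (True,False,False), (True,False,True), (True,True,False), (True,True,True)}"
    by auto
  show ?thesis by (subst U) (simp add: add.assoc)
qed

lemma U6_eq: "U6 = op3_scale (1 / complex_of_real (sqrt 2))
           (op3_add (op3_add (op3_add
              (kron3 (ketbra False False) I2 I2)
              (op3_add (kron3 (ketbra False True) sigma1 I2)
                       (op3_scale (-2) (kron3 (ketbra False True) (ketbra False True) (ketbra True True)))))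
              (kron3 (ketbra True False) I2 sigma1))
              (op3_add (op3_scale 2 (kron3 (ketbra True True) (ketbra False True) (ketbra False True)))
                       (op3_scale (-1) (kron3 (ketbra True True) sigma1 sigma1))))"
  apply (rule ext)+
  apply (auto simp: U6_def op3_mult_def sumUNIV3 op3_add_def op3_scale_def kron3_def ketbra_def I2_def sigma1_def hadamard_def U3_def T_AB_I_def T_AC_IB_def split: prod.splits)
  done

lemma U6_val: "U6 (a,b,c) (a',b',c') = (1 / complex_of_real (sqrt 2)) *
   ((if \<not>a \<and> \<not>a' then I2 b b' * I2 c c' else 0)
  + (if \<not>a \<and> a' then sigma1 b b' * I2 c c' - 2 * ketbra False True b b' * ketbra True True c c' else 0)
  + (if a \<and> \<not>a' then I2 b b' * sigma1 c c' else 0)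
  + (if a \<and> a' then 2 * ketbra False True b b' * ketbra False True c c' - sigma1 b b' * sigma1 c c' else 0))"
  by (auto simp: U6_eq op3_scale_def op3_add_def kron3_def ketbra_def I2_def sigma1_def algebra_simps diff_divide_distrib add_divide_distrib)

lemma upper: "\<exists>As Bs Cs :: nat \<Rightarrow> mat2. U6 = (\<lambda>i j. \<Sum>k<6. kron3 (As k) (Bs k) (Cs k) i j)"
proof -
  define s where "s = 1 / complex_of_real (sqrt 2)"
  define As where "As = (\<lambda>k::nat. [\<lambda>a b. s * ketbra False False a b, \<lambda>a b. s * ketbra False True a b,
      \<lambda>a b. -2 * s * ketbra False True a b, \<lambda>a b. s * ketbra True False a b,
      \<lambda>a b. 2 * s * ketbra True True a b, \<lambda>a b. - s * ketbra True True a b] ! k)"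
  define Bs where "Bs = (\<lambda>k::nat. [I2, sigma1, ketbra False True, I2, ketbra False True, sigma1] ! k)"
  define Cs where "Cs = (\<lambda>k::nat. [I2, I2, ketbra True True, sigma1, ketbra False True, sigma1] ! k)"
  have "U6 = (\<lambda>i j. \<Sum>k<6. kron3 (As k) (Bs k) (Cs k) i j)"
    apply (rule ext)+
    apply (clarsimp simp: U6_val numeral_eq_Suc sum.lessThan_Suc As_def Bs_def Cs_def kron3_def s_def)
    apply (auto simp: ketbra_def I2_def sigma1_def algebra_simps)
    done
  then show ?thesis by blast
qed


definition tA :: "mat2 \<Rightarrow> mat2 \<Rightarrow> complex" where
  "tA t A = t False False * A False False + t False True * A False True + t True False * A True False + t True True * A True True"

lemma contract:
  assumes dec: "U6 = (\<lambda>i j. \<Sum>k<r. kron3 (As k) (Bs k) (Cs k) i j)"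
  shows "t False False * U6 (False,b,c) (False,b',c') + t False True * U6 (False,b,c) (True,b',c')
       + t True False * U6 (True,b,c) (False,b',c') + t True True * U6 (True,b,c) (True,b',c')
       = (\<Sum>k<r. tA t (As k) * Bs k b b' * Cs k c c')"
proof -
  have e: "U6 (a,b,c) (a',b',c') = (\<Sum>k<r. As k a a' * Bs k b b' * Cs k c c')" for a a'
    using fun_cong[OF fun_cong[OF dec, of "(a,b,c)"], of "(a',b',c')"] by (simp add: kron3_def)
  show ?thesis unfolding e tA_def
    by (simp add: sum_distrib_left sum.distrib[symmetric] algebra_simps)
qed

lemma pair_exists:
  assumes dec: "U6 = (\<lambda>i j. \<Sum>k<r. kron3 (As k) (Bs k) (Cs k) i j)"
  shows "\<exists>k1<r. \<exists>k2<r. As k1 False False * As k2 True False - As k1 True False * As k2 False False \<noteq> 0"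
proof (rule ccontr)
  assume H: "\<not> ?thesis"
  have "\<exists>c0 c1. (c0 \<noteq> 0 \<or> c1 \<noteq> 0) \<and> (\<forall>k<r. c0 * As k False False + c1 * As k True False = 0)" (is ?E)
  proof (cases "\<forall>k<r. As k False False = 0 \<and> As k True False = 0")
    case True then show ?E by (intro exI[of _ 1] exI[of _ 0]) auto
  next
    case False
    then obtain k0 where k0: "k0 < r" "As k0 False False \<noteq> 0 \<or> As k0 True False \<noteq> 0" by auto
    have a: "As k0 True False \<noteq> 0 \<or> - As k0 False False \<noteq> 0" using k0 by auto
    have b: "As k0 True False * As k False False + - As k0 False False * As k True False = 0" if "k < r" for k
    proof -
      have "As k False False * As k0 True False - As k True False * As k0 False False = 0"
        using H k0 that by auto
      then show ?thesis by (simp add: algebra_simps)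
    qed
    show ?E using a b by blast
  qed
  then obtain c0 c1 where cc: "c0 \<noteq> 0 \<or> c1 \<noteq> 0" "\<forall>k<r. c0 * As k False False + c1 * As k True False = 0"
    by blast
  define t :: mat2 where "t = (\<lambda>a a'. if a' then 0 else if a then c1 else c0)"
  have z: "tA t (As k) = 0" if "k < r" for k using cc(2) that by (simp add: tA_def t_def)
  have s0: "1 / complex_of_real (sqrt 2) \<noteq> 0" by simp
  have "c0 * (1 / complex_of_real (sqrt 2)) = 0"
    using contract[OF dec, of t False False False False] z
    by (simp add: t_def U6_val I2_def sigma1_def ketbra_def)
  moreover have "c1 * (1 / complex_of_real (sqrt 2)) = 0"
    using contract[OF dec, of t False False False True] z
    by (simp add: t_def U6_val I2_def sigma1_def ketbra_def)
  ultimately show False using cc(1) s0 by auto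
qed


definition LHS :: "mat2 \<Rightarrow> bool \<Rightarrow> bool \<Rightarrow> bool \<Rightarrow> bool \<Rightarrow> complex" where
  "LHS t b b' c c' = t False False * U6 (False,b,c) (False,b',c') + t False True * U6 (False,b,c) (True,b',c')
       + t True False * U6 (True,b,c) (False,b',c') + t True True * U6 (True,b,c) (True,b',c')"

definition V :: "mat2 \<Rightarrow> bool \<Rightarrow> bool \<Rightarrow> complex^(bool\<times>bool)" where
  "V t b b' = (\<chi> p. LHS t b b' (fst p) (snd p))"

lemma V_span:
  assumes dec: "U6 = (\<lambda>i j. \<Sum>k<(r::nat). kron3 (As k) (Bs k) (Cs k) i j)"
    and z1: "tA t (As k1) = 0" and z2: "tA t (As k2) = 0"
  shows "V t b b' \<in> vec.span ((\<lambda>k. \<chi> p. Cs k (fst p) (snd p)) ` ({..<r} - {k1,k2}))"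
proof -
  let ?w = "\<lambda>k. (\<chi> p. Cs k (fst p) (snd p)) :: complex^(bool\<times>bool)"
  have "LHS t b b' c c' = (\<Sum>k\<in>{..<r} - {k1,k2}. tA t (As k) * Bs k b b' * Cs k c c')" for c c'
  proof -
    have "LHS t b b' c c' = (\<Sum>k<r. tA t (As k) * Bs k b b' * Cs k c c')"
      unfolding LHS_def by (rule contract[OF dec])
    also have "\<dots> = (\<Sum>k\<in>{..<r} - {k1,k2}. tA t (As k) * Bs k b b' * Cs k c c')"
      by (rule sum.mono_neutral_right) (auto simp: z1 z2)
    finally show ?thesis .
  qed
  then have "V t b b' = (\<Sum>k\<in>{..<r} - {k1,k2}. (tA t (As k) * Bs k b b') *s ?w k)"
    by (simp add: V_def vec_eq_iff sum_component mult.assoc)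
  also have "\<dots> \<in> vec.span (?w ` ({..<r} - {k1,k2}))"
    by (intro vec.span_sum vec.span_scale vec.span_base) auto
  finally show ?thesis .
qed

lemma lower:
  assumes dec: "U6 = (\<lambda>i j. \<Sum>k<r. kron3 (As k) (Bs k) (Cs k) i j)"
  shows "6 \<le> (r::nat)"
proof (rule ccontr)
  assume "\<not> 6 \<le> r"
  then have r5: "r \<le> 5" by simp
  obtain k1 k2 where k: "k1 < r" "k2 < r"
    and d0: "As k1 False False * As k2 True False - As k1 True False * As k2 False False \<noteq> 0"
    using pair_exists[OF dec] by blast
  have k12: "k1 \<noteq> k2" using d0 by (auto simp: algebra_simps)
  define d where "d = As k1 False False * As k2 True False - As k1 True False * As k2 False False"
  have dnz: "d \<noteq> 0" using d0 d_def by simp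
  define t1 :: mat2 where "t1 = (\<lambda>a a'. if a' then (if a then 0 else 1) else if a then
        (- As k1 False False * As k2 False True + As k1 False True * As k2 False False) / d
      else (- As k1 False True * As k2 True False + As k1 True False * As k2 False True) / d)"
  define t2 :: mat2 where "t2 = (\<lambda>a a'. if a' then (if a then 1 else 0) else if a then
        (- As k1 False False * As k2 True True + As k1 True True * As k2 False False) / d
      else (- As k1 True True * As k2 True False + As k1 True False * As k2 True True) / d)"
  have z: "tA t1 (As k1) = 0" "tA t1 (As k2) = 0" "tA t2 (As k1) = 0" "tA t2 (As k2) = 0"
    using dnz by (simp_all add: tA_def t1_def t2_def field_simps; simp add: d_def; algebra)+
  let ?w = "\<lambda>k. (\<chi> p. Cs k (fst p) (snd p)) :: complex^(bool\<times>bool)"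
  let ?S = "vec.span (?w ` ({..<r} - {k1,k2}))"
  have sp: "V t1 b b' \<in> ?S" "V t2 b b' \<in> ?S" for b b'
    using V_span[OF dec z(1,2)] V_span[OF dec z(3,4)] by auto
  define sc where "sc = 1 / complex_of_real (sqrt 2)"
  have snz: "sc \<noteq> 0" by (simp add: sc_def)
  have e11: "axis (True,True) 1 = (1 / (2 * sc)) *s (V t1 True False - V t1 False True)"
    using snz by (auto simp: vec_eq_iff V_def LHS_def U6_val t1_def axis_def I2_def sigma1_def ketbra_def sc_def[symmetric] field_simps)
  have e00: "axis (False,False) 1 = (1 / sc) *s V t1 True False - axis (True,True) 1"
    using snz by (auto simp: vec_eq_iff V_def LHS_def U6_val t1_def axis_def I2_def sigma1_def ketbra_def sc_def[symmetric] field_simps)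
  have e01: "axis (False,True) 1 = (1 / (2 * sc)) *s (V t2 False True - V t2 True False)"
    using snz by (auto simp: vec_eq_iff V_def LHS_def U6_val t2_def axis_def I2_def sigma1_def ketbra_def sc_def[symmetric] field_simps)
  have e10: "axis (True,False) 1 = (- 1 / sc) *s V t2 True False - axis (False,True) 1"
    using snz by (auto simp: vec_eq_iff V_def LHS_def U6_val t2_def axis_def I2_def sigma1_def ketbra_def sc_def[symmetric] field_simps)
  have a11: "axis (True,True) 1 \<in> ?S" unfolding e11 by (intro vec.span_scale vec.span_diff sp)
  have a00: "axis (False,False) 1 \<in> ?S" unfolding e00 by (intro vec.span_scale vec.span_diff sp a11)
  have a01: "axis (False,True) 1 \<in> ?S" unfolding e01 by (intro vec.span_scale vec.span_diff sp)
  have a10: "axis (True,False) 1 \<in> ?S" unfolding e10 by (intro vec.span_scale vec.span_diff sp a01)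
  have "cart_basis \<subseteq> ?S"
  proof
    fix x :: "complex^(bool\<times>bool)" assume "x \<in> cart_basis"
    then obtain i where "x = axis i 1" unfolding cart_basis_def by auto
    then show "x \<in> ?S" using a11 a00 a01 a10 by (cases i; case_tac a; case_tac b) auto
  qed
  then have "vec.span cart_basis \<subseteq> ?S"
    by (intro vec.span_minimal vec.subspace_span)
  then have U: "UNIV \<subseteq> ?S" by simp
  have "vec.dim (UNIV :: (complex^(bool\<times>bool)) set) \<le> card (?w ` ({..<r} - {k1,k2}))"
    by (rule vec.dim_le_card[OF U]) simp
  also have "\<dots> \<le> card ({..<r} - {k1,k2})" by (rule card_image_le) simp
  also have "\<dots> = r - 2" using k k12 by (subst card_Diff_subset) auto
  finally have "vec.dim (UNIV :: (complex^(bool\<times>bool)) set) \<le> r - 2" .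
  moreover have "vec.dim (UNIV :: (complex^(bool\<times>bool)) set) = 4"
    by (simp add: card_cart_basis)
  ultimately show False using r5 by simp
qed


theorem mainTheorem16:
  shows "U6 = op3_scale (1 / complex_of_real (sqrt 2))
           (op3_add (op3_add (op3_add
              (kron3 (ketbra False False) I2 I2)
              (op3_add (kron3 (ketbra False True) sigma1 I2)
                       (op3_scale (-2) (kron3 (ketbra False True) (ketbra False True) (ketbra True True)))))
              (kron3 (ketbra True False) I2 sigma1))
              (op3_add (op3_scale 2 (kron3 (ketbra True True) (ketbra False True) (ketbra False True)))
                       (op3_scale (-1) (kron3 (ketbra True True) sigma1 sigma1))))
         \<and> schmidt_rank U6 = 6"
proof (rule conjI[OF U6_eq])
  show "schmidt_rank U6 = 6" unfolding schmidt_rank_def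
  proof (rule Least_equality)
    show "\<exists>As Bs Cs :: nat \<Rightarrow> mat2. U6 = (\<lambda>i j. \<Sum>k<6. kron3 (As k) (Bs k) (Cs k) i j)"
      by (rule upper)
    fix y assume "\<exists>As Bs Cs :: nat \<Rightarrow> mat2. U6 = (\<lambda>i j. \<Sum>k<y. kron3 (As k) (Bs k) (Cs k) i j)"
    then show "6 \<le> y" using lower by blast
  qed
qed

end
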